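(* Let documents $t_1,\ldots,t_N$, each containing at most $L$ distinct words from a dictionary of $D\ge 2$ words, arrive one at a time in a stream. Fix $\epsilon\in(0,1]$ and $p=2\log D$. The streaming algorithm maintains, for each word $x$, a counter $\#(x)$ of the number of documents seen so far containing $x$, and a hash map $H$ keyed by pairs of words, each entry holding a bag of numbers. On arrival of a document, the counters are updated, and for each unordered pair of distinct words $x,y$ in the document, with an independent coin flip of probability $q=\min\!\left(1,\frac{p}{\epsilon}\frac{1}{\sqrt{\#(x)\#(y)}}\right)$ (computed with the current counter values), the value $q$ is inserted into the bag of $(x,y)$ in $H$. Then the expected total memory used by this algorithm (the size of $H$ together with the counters) is $O(DL\lg(N)\log(D)/\epsilon)$.
   Context: $\lg$ is the base-2 logarithm and $\log$ the natural logarithm. Queries for the similarity of $x,y$ are answered by independently subsampling each stored value $q_i$ in the bag of $(x,y)$ with probability $\frac{p}{\epsilon}\frac{1}{q_i\sqrt{\#(x)\#(y)}}$ and scaling the number of survivors by $\epsilon/p$; queries do not affect memory. *)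

theory Defs
  imports "HOL-Probability.Probability"
begin

type_synonym word = nat
(* state: counters #(x), and hash map H from unordered pairs {x,y} to bags of stored values *)
type_synonym state = "(word \<Rightarrow> nat) \<times> (word set \<Rightarrow> real multiset)"

definition doc_pairs :: "word set \<Rightarrow> word set set" where
  "doc_pairs t = {e. e \<subseteq> t \<and> card e = 2}"

definition init_state :: state where
  "init_state = (\<lambda>_. 0, \<lambda>_. {#})"

definition samp_prob :: "real \<Rightarrow> real \<Rightarrow> (word \<Rightarrow> nat) \<Rightarrow> word set \<Rightarrow> real" where
  "samp_prob p eps c e = min 1 (p / eps * (1 / sqrt (\<Prod>x\<in>e. real (c x))))"

definition alg_step :: "real \<Rightarrow> real \<Rightarrow> state \<Rightarrow> word set \<Rightarrow> state pmf" where
  "alg_step p eps s t =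
     (let c' = (\<lambda>x. if x \<in> t then fst s x + 1 else fst s x)
      in map_pmf
           (\<lambda>b. (c', \<lambda>e. snd s e +
                   (if e \<in> doc_pairs t \<and> b e then {# samp_prob p eps c' e #} else {#})))
           (Pi_pmf (doc_pairs t) False (\<lambda>e. bernoulli_pmf (samp_prob p eps c' e))))"

definition run_alg :: "real \<Rightarrow> real \<Rightarrow> word set list \<Rightarrow> state pmf" where
  "run_alg p eps ts = foldl (\<lambda>M t. bind_pmf M (\<lambda>s. alg_step p eps s t)) (return_pmf init_state) ts"

(* memory: D counters + number of keys present in H + total number of stored values *)
definition memory :: "word set \<Rightarrow> state \<Rightarrow> nat" where
  "memory Dict s = card Dict + card {e \<in> doc_pairs Dict. snd s e \<noteq> {#}}
                   + (\<Sum>e\<in>doc_pairs Dict. size (snd s e))"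

end

theory Submission
  imports Defs
begin

definition cnt :: "word set list \<Rightarrow> word \<Rightarrow> nat" where
  "cnt ts x = length (filter (\<lambda>t. x \<in> t) ts)"

definition totT :: "word set \<Rightarrow> state \<Rightarrow> real" where
  "totT Dict s = (\<Sum>e\<in>doc_pairs Dict. real (size (snd s e)))"

lemma run_alg_snoc: "run_alg p eps (ts @ [t]) = bind_pmf (run_alg p eps ts) (\<lambda>s. alg_step p eps s t)"
  by (simp add: run_alg_def)

lemma finite_doc_pairs: "finite D \<Longrightarrow> finite (doc_pairs D)"
  unfolding doc_pairs_def by (rule finite_subset[of _ "Pow D"]) auto

lemma set_alg_step: "finite (doc_pairs t) \<Longrightarrow> 
  set_pmf (alg_step p eps s t) \<subseteq> (\<lambda>b. ((\<lambda>x. if x \<in> t then fst s x + 1 else fst s x), \<lambda>e. snd s e +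
                   (if e \<in> doc_pairs t \<and> b e then {# samp_prob p eps (\<lambda>x. if x \<in> t then fst s x + 1 else fst s x) e #} else {#}))) ` PiE_dflt (doc_pairs t) False (\<lambda>_. UNIV)"
  unfolding alg_step_def Let_def using set_Pi_pmf_subset'[of "doc_pairs t" False]
  apply (simp add: set_map_pmf)
  by (smt (verit, del_insts) PiE_dflt_def UNIV_I image_mono mem_Collect_eq subset_eq)

lemma run_alg_props:
  assumes "\<forall>t\<in>set ts. finite t"
  shows "finite (set_pmf (run_alg p eps ts)) \<and> (\<forall>s\<in>set_pmf (run_alg p eps ts). fst s = cnt ts)"
  using assms
proof (induction ts rule: rev_induct)
  case Nil
  then show ?case by (auto simp: run_alg_def init_state_def cnt_def)
next
  case (snoc t ts)
  have ft: "finite (doc_pairs t)" using snoc.prems by (simp add: finite_doc_pairs)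
  have fin: "finite (PiE_dflt (doc_pairs t) False (\<lambda>_. UNIV::bool set))"
    using ft by auto
  have IH: "finite (set_pmf (run_alg p eps ts))" "\<forall>s\<in>set_pmf (run_alg p eps ts). fst s = cnt ts"
    using snoc by auto
  show ?case
  proof
    show "finite (set_pmf (run_alg p eps (ts @ [t])))"
      unfolding run_alg_snoc set_bind_pmf using IH(1)
      by (intro finite_UN_I) (auto intro: finite_subset[OF set_alg_step[OF ft]] fin)
    show "\<forall>s\<in>set_pmf (run_alg p eps (ts @ [t])). fst s = cnt (ts @ [t])"
      unfolding run_alg_snoc set_bind_pmf using IH(2) set_alg_step[OF ft]
      by (fastforce simp: cnt_def)
  qed
qed
lemma samp_prob_bounds: "0 \<le> p \<Longrightarrow> 0 < eps \<Longrightarrow> 0 \<le> samp_prob p eps c e \<and> samp_prob p eps c e \<le> 1"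
  unfolding samp_prob_def by (auto intro!: divide_nonneg_nonneg mult_nonneg_nonneg prod_nonneg)

lemma bern_exp: "0 \<le> q \<Longrightarrow> q \<le> 1 \<Longrightarrow> measure_pmf.expectation (bernoulli_pmf q) (\<lambda>b. of_bool b) = (q::real)"
  by (subst integral_measure_pmf_real[where A=UNIV]) (auto simp: UNIV_bool)

lemma step_exp:
  fixes s :: state
  assumes "finite Dict" "t \<subseteq> Dict" "0 \<le> p" "0 < eps"
  defines "c' \<equiv> (\<lambda>x. if x \<in> t then fst s x + 1 else fst s x)"
  shows "measure_pmf.expectation (alg_step p eps s t) (totT Dict) =
         totT Dict s + (\<Sum>e\<in>doc_pairs t. samp_prob p eps c' e)"
proof -
  have ft: "finite t" using assms finite_subset by blast
  have fpt: "finite (doc_pairs t)" using ft by (simp add: finite_doc_pairs)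
  have sub: "doc_pairs t \<subseteq> doc_pairs Dict" using assms(2) unfolding doc_pairs_def by auto
  have fpd: "finite (doc_pairs Dict)" using assms(1) by (simp add: finite_doc_pairs)
  let ?P = "Pi_pmf (doc_pairs t) False (\<lambda>e. bernoulli_pmf (samp_prob p eps c' e))"
  have finP: "finite (set_pmf ?P)"
    using fpt by (intro finite_subset[OF set_Pi_pmf_subset'[OF fpt]]) auto
  have pt: "totT Dict (c', \<lambda>e. snd s e +
                   (if e \<in> doc_pairs t \<and> b e then {# samp_prob p eps c' e #} else {#}))
        = totT Dict s + (\<Sum>e\<in>doc_pairs t. of_bool (b e))" for b
  proof -
    have "totT Dict (c', \<lambda>e. snd s e +
                   (if e \<in> doc_pairs t \<and> b e then {# samp_prob p eps c' e #} else {#}))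
       = totT Dict s + (\<Sum>e\<in>doc_pairs Dict. of_bool (e \<in> doc_pairs t \<and> b e))"
      unfolding totT_def by (simp add: sum.distrib[symmetric]) (intro sum.cong, auto)
    also have "(\<Sum>e\<in>doc_pairs Dict. of_bool (e \<in> doc_pairs t \<and> b e)) = (\<Sum>e\<in>doc_pairs t. (of_bool (b e)::real))"
      using sub fpd by (intro sum.mono_neutral_cong_right) auto
    finally show ?thesis .
  qed
  have "measure_pmf.expectation (alg_step p eps s t) (totT Dict) =
        measure_pmf.expectation ?P (\<lambda>b. totT Dict s + (\<Sum>e\<in>doc_pairs t. of_bool (b e)))"
    unfolding alg_step_def Let_def c'_def[symmetric] by (simp add: pt)
  also have "\<dots> = totT Dict s + (\<Sum>e\<in>doc_pairs t. measure_pmf.expectation ?P (\<lambda>b. of_bool (b e)))"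
    using finP by (simp add: integrable_measure_pmf_finite Bochner_Integration.integral_sum)
  also have "(\<Sum>e\<in>doc_pairs t. measure_pmf.expectation ?P (\<lambda>b. of_bool (b e))) = (\<Sum>e\<in>doc_pairs t. samp_prob p eps c' e)"
  proof (rule sum.cong[OF refl])
    fix e assume e: "e \<in> doc_pairs t"
    have "measure_pmf.expectation ?P (\<lambda>b. of_bool (b e)) = measure_pmf.expectation (map_pmf (\<lambda>b. b e) ?P) (\<lambda>b. (of_bool b :: real))"
      by (rule integral_map_pmf[symmetric])
    also have "\<dots> = measure_pmf.expectation (bernoulli_pmf (samp_prob p eps c' e)) (\<lambda>b. of_bool b)"
      using e by (simp add: Pi_pmf_component[OF fpt])
    also have "\<dots> = samp_prob p eps c' e"
      using samp_prob_bounds[OF assms(3,4)] by (intro bern_exp) auto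
    finally show "measure_pmf.expectation ?P (\<lambda>b. of_bool (b e)) = samp_prob p eps c' e" .
  qed
  finally show ?thesis .
qed

lemma inv_sqrt_le: "(a::real) > 0 \<Longrightarrow> b > 0 \<Longrightarrow> 1 / sqrt (a * b) \<le> (1/a + 1/b) / 2"
proof -
  assume a: "a > 0" and b: "b > 0"
  have "1 / sqrt (a * b) = sqrt ((1/a) * (1/b))" by (simp add: real_sqrt_divide real_sqrt_mult)
  also have "\<dots> \<le> (1/a + 1/b) / 2" using a b by (intro arith_geo_mean_sqrt) auto
  finally show ?thesis .
qed

lemma samp_pair_bound:
  assumes "e \<in> doc_pairs t" "\<forall>x\<in>t. c x \<ge> 1" "0 \<le> p" "0 < eps"
  shows "samp_prob p eps c e \<le> p / eps / 2 * (\<Sum>z\<in>e. 1 / real (c z))"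
proof -
  obtain x y where e: "e = {x,y}" "x \<noteq> y" "x \<in> t" "y \<in> t"
    using assms(1) unfolding doc_pairs_def by (auto simp: card_2_iff)
  have cx: "real (c x) > 0" "real (c y) > 0" using assms(2) e by force+
  have "samp_prob p eps c e \<le> p / eps * (1 / sqrt (real (c x) * real (c y)))"
    unfolding samp_prob_def using e by simp
  also have "\<dots> \<le> p / eps * ((1 / real (c x) + 1 / real (c y)) / 2)"
    using assms(3,4) cx by (intro mult_left_mono inv_sqrt_le) auto
  also have "\<dots> = p / eps / 2 * (\<Sum>z\<in>e. 1 / real (c z))" using e by simp
  finally show ?thesis .
qed

lemma pair_sum_bound:
  fixes f :: "word \<Rightarrow> real"
  assumes "finite t" "card t \<le> L" "\<forall>x\<in>t. f x \<ge> 0"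
  shows "(\<Sum>e\<in>doc_pairs t. \<Sum>z\<in>e. f z) \<le> real L * (\<Sum>z\<in>t. f z)"
proof -
  have fp: "finite (doc_pairs t)" using assms(1) by (simp add: finite_doc_pairs)
  have "(\<Sum>e\<in>doc_pairs t. \<Sum>z\<in>e. f z) = (\<Sum>e\<in>doc_pairs t. \<Sum>z\<in>{z. z \<in> t \<and> z \<in> e}. f z)"
    by (intro sum.cong refl) (auto simp: doc_pairs_def intro!: arg_cong[where f="\<lambda>A. sum f A"])
  also have "\<dots> = (\<Sum>z\<in>t. \<Sum>e\<in>{e. e \<in> doc_pairs t \<and> z \<in> e}. f z)"
    using fp assms(1) by (rule sum.swap_restrict)
  also have "\<dots> = (\<Sum>z\<in>t. f z * real (card {e. e \<in> doc_pairs t \<and> z \<in> e}))"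
    by (simp add: mult.commute)
  also have "\<dots> \<le> (\<Sum>z\<in>t. f z * real L)"
  proof (intro sum_mono mult_left_mono)
    fix z assume z: "z \<in> t"
    have "{e. e \<in> doc_pairs t \<and> z \<in> e} \<subseteq> (\<lambda>y. {z, y}) ` t"
    proof
      fix e assume "e \<in> {e. e \<in> doc_pairs t \<and> z \<in> e}"
      then obtain a b where "e = {a,b}" "a \<noteq> b" "e \<subseteq> t" "z \<in> e"
        unfolding doc_pairs_def by (auto simp: card_2_iff)
      then show "e \<in> (\<lambda>y. {z, y}) ` t" by auto
    qed
    then have "card {e. e \<in> doc_pairs t \<and> z \<in> e} \<le> card ((\<lambda>y. {z, y}) ` t)"
      using assms(1) by (intro card_mono) auto
    also have "\<dots> \<le> card t" using assms(1) by (rule card_image_le)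
    finally show "real (card {e. e \<in> doc_pairs t \<and> z \<in> e}) \<le> real L" using assms(2) by simp
    show "0 \<le> f z" using assms(3) z by auto
  qed
  also have "\<dots> = real L * (\<Sum>z\<in>t. f z)" by (simp add: sum_distrib_left mult.commute)
  finally show ?thesis .
qed

definition G :: "nat \<Rightarrow> real" where "G n = (if n = 0 then 0 else 1 + ln (real n))"

lemma G_step: "1 / real (Suc n) \<le> G (Suc n) - G n"
proof (cases "n = 0")
  case True then show ?thesis by (simp add: G_def)
next
  case False
  then have n: "real n > 0" by simp
  have "ln (real n / real (Suc n)) \<le> real n / real (Suc n) - 1"
    using n by (intro ln_le_minus_one) auto
  also have "real n / real (Suc n) - 1 = - (1 / real (Suc n))" by (simp add: field_simps)
  finally have "1 / real (Suc n) \<le> ln (real (Suc n)) - ln (real n)"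
    using n by (simp add: ln_div)
  then show ?thesis using False by (simp add: G_def)
qed

lemma G_mono_bound: "n \<le> N \<Longrightarrow> N \<ge> 1 \<Longrightarrow> G n \<le> 1 + ln (real N)"
  by (auto simp: G_def)

definition Phi :: "word set \<Rightarrow> (word \<Rightarrow> nat) \<Rightarrow> real" where
  "Phi Dict c = (\<Sum>x\<in>Dict. G (c x))"

lemma cnt_snoc: "cnt (ts @ [t]) = (\<lambda>x. if x \<in> t then cnt ts x + 1 else cnt ts x)"
  by (auto simp: cnt_def)

lemma Phi_step:
  assumes "finite Dict" "t \<subseteq> Dict"
  shows "(\<Sum>z\<in>t. 1 / real (cnt (ts @ [t]) z)) \<le> Phi Dict (cnt (ts @ [t])) - Phi Dict (cnt ts)"
proof -
  have "Phi Dict (cnt (ts @ [t])) - Phi Dict (cnt ts) = (\<Sum>x\<in>Dict. G (cnt (ts @ [t]) x) - G (cnt ts x))"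
    unfolding Phi_def by (simp add: sum_subtractf)
  also have "\<dots> = (\<Sum>x\<in>t. G (cnt (ts @ [t]) x) - G (cnt ts x))"
    using assms by (intro sum.mono_neutral_right) (auto simp: cnt_snoc)
  finally have eq: "Phi Dict (cnt (ts @ [t])) - Phi Dict (cnt ts) = (\<Sum>x\<in>t. G (cnt (ts @ [t]) x) - G (cnt ts x))" .
  show ?thesis unfolding eq
    by (intro sum_mono) (simp add: cnt_snoc G_step del: of_nat_Suc)
qed

lemma main_ind:
  assumes "finite Dict" "\<forall>t\<in>set ts. t \<subseteq> Dict \<and> card t \<le> L" "0 \<le> p" "0 < eps"
  shows "measure_pmf.expectation (run_alg p eps ts) (totT Dict) \<le> p / eps / 2 * real L * Phi Dict (cnt ts)"
  using assms(2)
proof (induction ts rule: rev_induct)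
  case Nil
  then show ?case by (simp add: run_alg_def init_state_def totT_def Phi_def cnt_def G_def)
next
  case (snoc t ts)
  have tD: "t \<subseteq> Dict" "card t \<le> L" using snoc.prems by auto
  have ft: "finite t" using tD assms(1) finite_subset by blast
  have fpt: "finite (doc_pairs t)" using ft by (simp add: finite_doc_pairs)
  have fin_all: "\<forall>t\<in>set ts. finite t" using snoc.prems assms(1) finite_subset by auto
  note props = run_alg_props[OF fin_all, of p eps]
  define A where "A = set_pmf (run_alg p eps ts)"
  have fA: "finite A" using props A_def by simp
  have fstA: "\<And>a. a \<in> A \<Longrightarrow> fst a = cnt ts" using props A_def by simp
  have finstep: "finite (set_pmf (alg_step p eps a t))" for a
    by (rule finite_subset[OF set_alg_step[OF fpt]], rule finite_imageI, use fpt in auto)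
  define S where "S = (\<Sum>e\<in>doc_pairs t. samp_prob p eps (cnt (ts @ [t])) e)"
  have stepA: "measure_pmf.expectation (alg_step p eps a t) (totT Dict) = totT Dict a + S" if "a \<in> A" for a
    using step_exp[OF assms(1) tD(1) assms(3,4), of a, unfolded fstA[OF that]] by (simp add: S_def cnt_snoc)
  have "measure_pmf.expectation (run_alg p eps (ts @ [t])) (totT Dict)
      = (\<Sum>a\<in>A. pmf (run_alg p eps ts) a *\<^sub>R measure_pmf.expectation (alg_step p eps a t) (totT Dict))"
    unfolding run_alg_snoc using fA finstep by (intro pmf_expectation_bind) (auto simp: A_def)
  also have "\<dots> = (\<Sum>a\<in>A. pmf (run_alg p eps ts) a * totT Dict a) + S * (\<Sum>a\<in>A. pmf (run_alg p eps ts) a)"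
    by (simp add: stepA algebra_simps sum.distrib sum_distrib_left)
  also have "(\<Sum>a\<in>A. pmf (run_alg p eps ts) a) = 1" using fA by (intro sum_pmf_eq_1) (auto simp: A_def)
  also have "(\<Sum>a\<in>A. pmf (run_alg p eps ts) a * totT Dict a) = measure_pmf.expectation (run_alg p eps ts) (totT Dict)"
    using fA by (subst integral_measure_pmf_real[where A=A]) (auto simp: A_def mult.commute)
  finally have E: "measure_pmf.expectation (run_alg p eps (ts @ [t])) (totT Dict) = measure_pmf.expectation (run_alg p eps ts) (totT Dict) + S"
    by simp
  have c1: "\<forall>x\<in>t. cnt (ts @ [t]) x \<ge> 1" by (simp add: cnt_snoc)
  have "S \<le> (\<Sum>e\<in>doc_pairs t. p / eps / 2 * (\<Sum>z\<in>e. 1 / real (cnt (ts @ [t]) z)))"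
    unfolding S_def by (intro sum_mono samp_pair_bound[OF _ c1 assms(3,4)])
  also have "\<dots> = p / eps / 2 * (\<Sum>e\<in>doc_pairs t. \<Sum>z\<in>e. 1 / real (cnt (ts @ [t]) z))"
    by (simp add: sum_distrib_left)
  also have "\<dots> \<le> p / eps / 2 * (real L * (\<Sum>z\<in>t. 1 / real (cnt (ts @ [t]) z)))"
    using assms(3,4) by (intro mult_left_mono pair_sum_bound[OF ft tD(2)]) auto
  also have "\<dots> \<le> p / eps / 2 * (real L * (Phi Dict (cnt (ts @ [t])) - Phi Dict (cnt ts)))"
    using assms(3,4) by (intro mult_left_mono Phi_step[OF assms(1) tD(1)]) auto
  finally have Sb: "S \<le> p / eps / 2 * real L * (Phi Dict (cnt (ts @ [t])) - Phi Dict (cnt ts))" by simp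
  have IH: "measure_pmf.expectation (run_alg p eps ts) (totT Dict) \<le> p / eps / 2 * real L * Phi Dict (cnt ts)"
    using snoc by auto
  show ?case using E Sb IH by (simp add: algebra_simps)
qed

lemma ln2_bounds: "1/2 \<le> ln (2::real)" "ln (2::real) \<le> 1"
proof -
  have "ln (1/2::real) \<le> 1/2 - 1" by (intro ln_le_minus_one) auto
  then show "1/2 \<le> ln (2::real)" by (simp add: ln_div)
  show "ln (2::real) \<le> 1" using ln_le_minus_one[of "2::real"] by simp
qed

lemma arith_final:
  fixes D N eps E X :: real and L :: nat
  assumes D2: "D \<ge> 2" and N2: "N \<ge> 2" and L1: "real L \<ge> 1" and e0: "0 < eps" and e1: "eps \<le> 1"
    and lnD: "ln D \<ge> 1/2"
  shows "D + 2 * (2 * ln D / eps / 2 * real L * (D * (1 + ln N))) \<le> 6 * D * real L * log 2 N * ln D / eps"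
proof -
    define R where "R = D * real L * log 2 N * ln D / eps"
    have lg: "log 2 N \<ge> 1" using N2 by simp
    have lnN: "ln N \<le> log 2 N"
    proof -
      have "log 2 N = ln N / ln 2" by (simp add: log_def)
      moreover have "ln N \<ge> 0" using N2 by simp
      ultimately show ?thesis using ln2_bounds by (simp add: le_divide_eq mult_left_le)
    qed
    have a1: "1 + ln N \<le> 2 * log 2 N" using lnN lg by simp
    have R1: "D * 1 * 1 * (1/2) \<le> D * real L * log 2 N * ln D"
      using D2 L1 lg lnD by (intro mult_mono) auto
    have R0: "0 \<le> D * real L * log 2 N * ln D" using R1 D2 by linarith
    have "D * real L * log 2 N * ln D \<le> D * real L * log 2 N * ln D / eps"
      using e0 e1 R0 by (simp add: le_divide_eq mult_left_le)
    then have i1: "D \<le> 2 * R" using R1 unfolding R_def by linarith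
    have "2 * (2 * ln D / eps / 2 * real L * (D * (1 + ln N))) = 2 * (D * real L * (1 + ln N) * ln D / eps)"
      by (simp add: field_simps)
    also have "\<dots> \<le> 2 * (D * real L * (2 * log 2 N) * ln D / eps)"
      using a1 e0 D2 L1 lnD by (intro mult_left_mono divide_right_mono mult_right_mono) auto
    also have "\<dots> = 4 * R" by (simp add: R_def)
    finally have i2: "2 * (2 * ln D / eps / 2 * real L * (D * (1 + ln N))) \<le> 4 * R" .
    have "D + 2 * (2 * ln D / eps / 2 * real L * (D * (1 + ln N))) \<le> 2 * R + 4 * R"
      using i1 i2 by (rule add_mono)
    also have "\<dots> = 6 * D * real L * log 2 N * ln D / eps" by (simp add: R_def)
    finally show ?thesis .
qed

lemma memory_le: "finite Dict \<Longrightarrow> real (memory Dict s) \<le> real (card Dict) + 2 * totT Dict s"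
proof -
  assume f: "finite Dict"
  have fp: "finite (doc_pairs Dict)" using f by (simp add: finite_doc_pairs)
  have "card {e \<in> doc_pairs Dict. snd s e \<noteq> {#}} = (\<Sum>e\<in>{e \<in> doc_pairs Dict. snd s e \<noteq> {#}}. 1::nat)"
    by simp
  also have "\<dots> \<le> (\<Sum>e\<in>{e \<in> doc_pairs Dict. snd s e \<noteq> {#}}. size (snd s e))"
    by (intro sum_mono) (auto simp: Suc_le_eq nonempty_has_size)
  also have "\<dots> \<le> (\<Sum>e\<in>doc_pairs Dict. size (snd s e))"
    using fp by (intro sum_mono2) auto
  finally have "card {e \<in> doc_pairs Dict. snd s e \<noteq> {#}} \<le> (\<Sum>e\<in>doc_pairs Dict. size (snd s e))" .
  then show ?thesis unfolding memory_def totT_def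
    by (simp flip: of_nat_sum)
qed

theorem theorem7:
  shows "\<exists>C>0. \<forall>(Dict :: word set) (ts :: word set list) (L :: nat) (eps :: real).
     finite Dict \<and> card Dict \<ge> 2 \<and> length ts \<ge> 2 \<and> L \<ge> 1 \<and>
     (\<forall>t\<in>set ts. t \<subseteq> Dict \<and> card t \<le> L) \<and> 0 < eps \<and> eps \<le> 1 \<longrightarrow>
     measure_pmf.expectation (run_alg (2 * ln (real (card Dict))) eps ts) (\<lambda>s. real (memory Dict s))
       \<le> C * real (card Dict) * real L * log 2 (real (length ts)) * ln (real (card Dict)) / eps"
proof (intro exI[of _ 6] conjI allI impI)
  fix Dict :: "word set" and ts :: "word set list" and L :: nat and eps :: real
  assume H: "finite Dict \<and> card Dict \<ge> 2 \<and> length ts \<ge> 2 \<and> L \<ge> 1 \<and>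
     (\<forall>t\<in>set ts. t \<subseteq> Dict \<and> card t \<le> L) \<and> 0 < eps \<and> eps \<le> 1"
  define D where "D = real (card Dict)"
  define N where "N = real (length ts)"
  define p where "p = 2 * ln D"
  have fD: "finite Dict" and D2: "D \<ge> 2" and N2: "N \<ge> 2" and L1: "real L \<ge> 1"
    and tsD: "\<forall>t\<in>set ts. t \<subseteq> Dict \<and> card t \<le> L" and e0: "0 < eps" and e1: "eps \<le> 1"
    using H by (auto simp: D_def N_def)
  have lnD: "ln D \<ge> 1/2" using ln2_bounds ln_le_cancel_iff[of 2 D] D2 by (smt (verit))
  have p0: "0 \<le> p" using lnD by (simp add: p_def)
  have fin_all: "\<forall>t\<in>set ts. finite t" using tsD fD by (meson finite_subset)
  have finR: "finite (set_pmf (run_alg p eps ts))" using run_alg_props[OF fin_all] by simp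
  have cntle: "cnt ts x \<le> length ts" for x by (simp add: cnt_def)
  have Phi_le: "Phi Dict (cnt ts) \<le> D * (1 + ln N)"
  proof -
    have "Phi Dict (cnt ts) \<le> (\<Sum>x\<in>Dict. 1 + ln N)"
      unfolding Phi_def N_def using N2 cntle by (intro sum_mono G_mono_bound) (auto simp: N_def)
    then show ?thesis by (simp add: D_def)
  qed
  have ET: "measure_pmf.expectation (run_alg p eps ts) (totT Dict) \<le> p / eps / 2 * real L * (D * (1 + ln N))"
  proof -
    have "measure_pmf.expectation (run_alg p eps ts) (totT Dict) \<le> p / eps / 2 * real L * Phi Dict (cnt ts)"
      by (rule main_ind[OF fD tsD p0 e0])
    also have "\<dots> \<le> p / eps / 2 * real L * (D * (1 + ln N))"
      using p0 e0 by (intro mult_left_mono Phi_le) auto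
    finally show ?thesis .
  qed
  have "measure_pmf.expectation (run_alg p eps ts) (\<lambda>s. real (memory Dict s))
      \<le> measure_pmf.expectation (run_alg p eps ts) (\<lambda>s. D + 2 * totT Dict s)"
    using finR memory_le[OF fD] by (intro integral_mono integrable_measure_pmf_finite) (auto simp: D_def)
  also have "\<dots> = D + 2 * measure_pmf.expectation (run_alg p eps ts) (totT Dict)"
    using finR by (simp add: integrable_measure_pmf_finite)
  also have "\<dots> \<le> D + 2 * (p / eps / 2 * real L * (D * (1 + ln N)))"
    using ET by (intro add_left_mono mult_left_mono) auto
  also have "\<dots> \<le> 6 * D * real L * log 2 N * ln D / eps"
    unfolding p_def by (rule arith_final[OF D2 N2 L1 e0 e1 lnD])
  finally show "measure_pmf.expectation (run_alg (2 * ln (real (card Dict))) eps ts) (\<lambda>s. real (memory Dict s))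
       \<le> 6 * real (card Dict) * real L * log 2 (real (length ts)) * ln (real (card Dict)) / eps"
    by (simp add: p_def D_def N_def)
qed (simp)

end
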